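(* Let $\mathsf{SafeInstance} \subseteq \mathbb{N}$ contain at least two elements. Then there is no metalanguage capturing the property $\psi(g)$: "$g$ halts on every input and outputs an element of $\mathsf{SafeInstance}$", i.e. $\psi(g) \leftrightarrow \forall x\,(\varphi_g(x)\downarrow \wedge \varphi_g(x) \in \mathsf{SafeInstance})$.
   Context: Programs (generators) are identified with natural numbers in a fixed universal programming language; $\varphi_g$ is the partial computable function computed by $g$ and $\varphi_g(x)\downarrow$ means $g$ halts on $x$. A metalanguage $L \subseteq \mathbb{N}$ captures a property $\psi$ if $L$ is decidable, every $g \in L$ satisfies $\psi$, and for every $g' \in \mathbb{N}$ satisfying $\psi$ there is $g \in L$ with $\varphi_g = \varphi_{g'}$. *)

theory Defs
  imports Main "HOL-Library.Nat_Bijection"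
begin

text \<open>A fixed universal programming language: unary partial recursive functions
on nat, with arguments/results paired via the Cantor pairing prod_encode.\<close>

datatype recf =
    Zero
  | Succ
  | Left
  | Right
  | Comp recf recf
  | Pair recf recf
  | Prec recf recf
  | Mu recf

inductive eval :: "recf \<Rightarrow> nat \<Rightarrow> nat \<Rightarrow> bool" where
  eval_Zero: "eval Zero x 0"
| eval_Succ: "eval Succ x (Suc x)"
| eval_Left: "eval Left x (fst (prod_decode x))"
| eval_Right: "eval Right x (snd (prod_decode x))"
| eval_Comp: "eval g x y \<Longrightarrow> eval f y z \<Longrightarrow> eval (Comp f g) x z"
| eval_Pair: "eval f x y \<Longrightarrow> eval g x z \<Longrightarrow> eval (Pair f g) x (prod_encode (y, z))"
| eval_Prec0: "eval f y z \<Longrightarrow> eval (Prec f g) (prod_encode (0, y)) z"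
| eval_PrecS: "eval (Prec f g) (prod_encode (n, y)) z \<Longrightarrow>
     eval g (prod_encode (prod_encode (n, y), z)) w \<Longrightarrow>
     eval (Prec f g) (prod_encode (Suc n, y)) w"
| eval_Mu: "eval f (prod_encode (n, x)) 0 \<Longrightarrow>
     (\<forall>i<n. \<exists>v. v \<noteq> 0 \<and> eval f (prod_encode (i, x)) v) \<Longrightarrow>
     eval (Mu f) x n"

lemma decode_fst_le: "fst (prod_decode m) \<le> m"
  by (metis le_prod_encode_1 prod.collapse prod_decode_inverse)
lemma decode_snd_le: "snd (prod_decode m) \<le> m"
  by (metis le_prod_encode_2 prod.collapse prod_decode_inverse)
function decode :: "nat \<Rightarrow> recf" where
  "decode n =
    (if n = 0 then Zero else if n = 1 then Succ else if n = 2 then Left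
     else if n = 3 then Right
     else (let t = fst (prod_decode (n - 4)); r = snd (prod_decode (n - 4));
               a = fst (prod_decode r); b = snd (prod_decode r)
           in if t mod 4 = 0 then Comp (decode a) (decode b)
              else if t mod 4 = 1 then Pair (decode a) (decode b)
              else if t mod 4 = 2 then Prec (decode a) (decode b)
              else Mu (decode r)))"
  by auto
termination
  apply (relation "measure id")
  apply simp_all
  using decode_fst_le decode_snd_le le_less_trans le_trans
  by (metis diff_less zero_less_numeral not_gr_zero)+

definition phi :: "nat \<Rightarrow> nat \<Rightarrow> nat option" where
  "phi g x = (if \<exists>v. eval (decode g) x v then Some (THE v. eval (decode g) x v) else None)"

definition halts :: "nat \<Rightarrow> nat \<Rightarrow> bool" where
  "halts g x \<longleftrightarrow> phi g x \<noteq> None"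

definition decidable :: "nat set \<Rightarrow> bool" where
  "decidable L \<longleftrightarrow> (\<exists>d. \<forall>x. phi d x = Some (if x \<in> L then 1 else 0))"

definition captures :: "nat set \<Rightarrow> (nat \<Rightarrow> bool) \<Rightarrow> bool" where
  "captures L \<psi> \<longleftrightarrow> decidable L \<and> (\<forall>g\<in>L. \<psi> g) \<and>
     (\<forall>g'. \<psi> g' \<longrightarrow> (\<exists>g\<in>L. phi g = phi g'))"

end

theory Submission
  imports Defs
begin

inductive_cases evZ: "eval Zero x v"
inductive_cases evS: "eval Succ x v"
inductive_cases evL: "eval Left x v"
inductive_cases evR: "eval Right x v"
inductive_cases evC: "eval (Comp f g) x v"
inductive_cases evP: "eval (Pair f g) x v"
inductive_cases evPr: "eval (Prec f g) x v"
inductive_cases evM: "eval (Mu f) x v"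

lemma eval_det: "eval f x v \<Longrightarrow> eval f x w \<Longrightarrow> v = w"
proof (induction arbitrary: w rule: eval.induct)
  case (eval_Zero x) then show ?case by (rule evZ) simp
next
  case (eval_Succ x) then show ?case by (rule evS) simp
next
  case (eval_Left x) then show ?case by (rule evL) simp
next
  case (eval_Right x) then show ?case by (rule evR) simp
next
  case (eval_Comp g x y f z)
  from eval_Comp.prems obtain y' where "eval g x y'" "eval f y' w" by (rule evC)
  then show ?case using eval_Comp.IH by metis
next
  case (eval_Pair f x y g z)
  from eval_Pair.prems obtain y' z' where "eval f x y'" "eval g x z'" "w = prod_encode (y', z')"
    by (rule evP)
  then show ?case using eval_Pair.IH by metis
next
  case (eval_Prec0 f y z g)
  from eval_Prec0.prems show ?case
  proof (rule evPr)
    fix y' assume "prod_encode (0, y) = prod_encode (0, y')" "eval f y' w"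
    then show ?thesis using eval_Prec0.IH by (simp add: prod_encode_eq)
  next
    fix n y' z' assume "prod_encode (0, y) = prod_encode (Suc n, y')"
    then show ?thesis by (simp add: prod_encode_eq)
  qed
next
  case (eval_PrecS f g n y z w0)
  from eval_PrecS.prems show ?case
  proof (rule evPr)
    fix y' assume "prod_encode (Suc n, y) = prod_encode (0, y')"
    then show ?thesis by (simp add: prod_encode_eq)
  next
    fix n' y' z' assume a: "prod_encode (Suc n, y) = prod_encode (Suc n', y')"
      "eval (Prec f g) (prod_encode (n', y')) z'"
      "eval g (prod_encode (prod_encode (n', y'), z')) w"
    then have "n = n'" "y = y'" by (simp_all add: prod_encode_eq)
    then show ?thesis using a eval_PrecS.IH by metis
  qed
next
  case (eval_Mu f n x)
  from eval_Mu.prems obtain m where w: "w = m" "eval f (prod_encode (m, x)) 0"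
    "\<forall>i<m. \<exists>v. v \<noteq> 0 \<and> eval f (prod_encode (i, x)) v"
    by (rule evM) blast
  show ?case
  proof (rule linorder_cases[of n m])
    assume "n < m"
    then obtain v where "v \<noteq> 0" "eval f (prod_encode (n, x)) v" using w by blast
    then show ?thesis using eval_Mu.IH(1) by blast
  next
    assume "m < n"
    then obtain v where "v \<noteq> 0" "eval f (prod_encode (m, x)) v" "\<forall>w. eval f (prod_encode (m, x)) w \<longrightarrow> v = w"
      using eval_Mu.IH(2) by blast
    then show ?thesis using w by blast
  qed (use w in blast)
qed


lemma eval_fun: "eval f x v \<Longrightarrow> (THE v. eval f x v) = v"
  using eval_det by blast

definition rec1 :: "(nat \<Rightarrow> nat) \<Rightarrow> bool" where
  "rec1 f \<longleftrightarrow> (\<exists>r. \<forall>x. eval r x (f x))"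

fun cprog :: "nat \<Rightarrow> recf" where
  "cprog 0 = Zero"
| "cprog (Suc n) = Comp Succ (cprog n)"

lemma eval_cprog: "eval (cprog c) x c"
  by (induction c) (auto intro: eval.intros)

lemma eval_id: "eval (Pair Left Right) x x"
proof -
  have "eval (Pair Left Right) x (prod_encode (fst (prod_decode x), snd (prod_decode x)))"
    by (intro eval.intros)
  then show ?thesis by simp
qed

lemma rec1_const: "rec1 (\<lambda>x. c)"
  unfolding rec1_def using eval_cprog by blast

lemma rec1_id: "rec1 (\<lambda>x. x)"
  unfolding rec1_def using eval_id by blast

lemma rec1_comp: "rec1 f \<Longrightarrow> rec1 g \<Longrightarrow> rec1 (\<lambda>x. f (g x))"
  unfolding rec1_def by (blast intro: eval.intros)

lemma rec1_fst: "rec1 f \<Longrightarrow> rec1 (\<lambda>x. fst (prod_decode (f x)))"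
  unfolding rec1_def by (blast intro: eval.intros)

lemma rec1_snd: "rec1 f \<Longrightarrow> rec1 (\<lambda>x. snd (prod_decode (f x)))"
  unfolding rec1_def by (blast intro: eval.intros)

lemma rec1_suc: "rec1 f \<Longrightarrow> rec1 (\<lambda>x. Suc (f x))"
  unfolding rec1_def by (blast intro: eval.intros)

lemma rec1_pair: "rec1 f \<Longrightarrow> rec1 g \<Longrightarrow> rec1 (\<lambda>x. prod_encode (f x, g x))"
  unfolding rec1_def by (blast intro: eval.intros)

fun PR :: "(nat \<Rightarrow> nat) \<Rightarrow> (nat \<Rightarrow> nat) \<Rightarrow> nat \<Rightarrow> nat \<Rightarrow> nat" where
  "PR b s 0 y = b y"
| "PR b s (Suc n) y = s (prod_encode (prod_encode (n, y), PR b s n y))"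

lemma rec1_PR:
  assumes "rec1 b" "rec1 s"
  shows "rec1 (\<lambda>p. PR b s (fst (prod_decode p)) (snd (prod_decode p)))"
proof -
  obtain rb rs where rb: "\<And>x. eval rb x (b x)" and rs: "\<And>x. eval rs x (s x)"
    using assms unfolding rec1_def by blast
  have *: "eval (Prec rb rs) (prod_encode (n, y)) (PR b s n y)" for n y
    by (induction n) (auto intro: eval.intros rb rs)
  have "eval (Prec rb rs) p (PR b s (fst (prod_decode p)) (snd (prod_decode p)))" for p
    using *[of "fst (prod_decode p)" "snd (prod_decode p)"] by simp
  then show ?thesis unfolding rec1_def by blast
qed

lemma rec1_2:
  assumes "rec1 (\<lambda>p. h (fst (prod_decode p)) (snd (prod_decode p)))" "rec1 f" "rec1 g"
  shows "rec1 (\<lambda>x. h (f x) (g x))"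
  using rec1_comp[OF assms(1) rec1_pair[OF assms(2,3)]] by simp

lemma PR_pred: "PR (\<lambda>_. 0) (\<lambda>q. fst (prod_decode (fst (prod_decode q)))) n y = n - 1"
  by (cases n) auto

lemma rec1_pred: "rec1 f \<Longrightarrow> rec1 (\<lambda>x. f x - 1)"
proof -
  assume f: "rec1 f"
  have "rec1 (\<lambda>p. PR (\<lambda>_. 0) (\<lambda>q. fst (prod_decode (fst (prod_decode q)))) (fst (prod_decode p)) (snd (prod_decode p)))"
    by (intro rec1_PR rec1_const rec1_fst rec1_id)
  then have "rec1 (\<lambda>p. fst (prod_decode p) - 1)" by (simp add: PR_pred)
  from rec1_comp[OF this rec1_pair[OF f rec1_const]] show ?thesis by simp
qed

lemma PR_sub: "PR (\<lambda>y. y) (\<lambda>q. snd (prod_decode q) - 1) n y = y - n"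
  by (induction n) auto

lemma rec1_sub: "rec1 f \<Longrightarrow> rec1 g \<Longrightarrow> rec1 (\<lambda>x. f x - g x)"
proof -
  assume f: "rec1 f" and g: "rec1 g"
  have "rec1 (\<lambda>p. PR (\<lambda>y. y) (\<lambda>q. snd (prod_decode q) - 1) (fst (prod_decode p)) (snd (prod_decode p)))"
    by (intro rec1_PR rec1_id rec1_pred rec1_snd)
  then have "rec1 (\<lambda>p. snd (prod_decode p) - fst (prod_decode p))" unfolding PR_sub .
  from rec1_comp[OF this rec1_pair[OF g f]] show ?thesis by simp
qed

lemma PR_add: "PR (\<lambda>y. y) (\<lambda>q. Suc (snd (prod_decode q))) n y = y + n"
  by (induction n) auto

lemma rec1_add: "rec1 f \<Longrightarrow> rec1 g \<Longrightarrow> rec1 (\<lambda>x. f x + g x)"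
proof -
  assume f: "rec1 f" and g: "rec1 g"
  have "rec1 (\<lambda>p. PR (\<lambda>y. y) (\<lambda>q. Suc (snd (prod_decode q))) (fst (prod_decode p)) (snd (prod_decode p)))"
    by (intro rec1_PR rec1_id rec1_suc rec1_snd)
  then have "rec1 (\<lambda>p. snd (prod_decode p) + fst (prod_decode p))" by (simp add: PR_add)
  from rec1_comp[OF this rec1_pair[OF g f]] show ?thesis by simp
qed

lemma PR_if: "PR (\<lambda>y. fst (prod_decode y)) (\<lambda>q. snd (prod_decode (snd (prod_decode (fst (prod_decode q)))))) n y
   = (if n = 0 then fst (prod_decode y) else snd (prod_decode y))"
  by (cases n) auto

lemma rec1_if0: "rec1 c \<Longrightarrow> rec1 f \<Longrightarrow> rec1 g \<Longrightarrow> rec1 (\<lambda>x. if c x = 0 then f x else g x)"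
proof -
  assume c: "rec1 c" and f: "rec1 f" and g: "rec1 g"
  have "rec1 (\<lambda>p. PR (\<lambda>y. fst (prod_decode y)) (\<lambda>q. snd (prod_decode (snd (prod_decode (fst (prod_decode q)))))) (fst (prod_decode p)) (snd (prod_decode p)))"
    by (intro rec1_PR rec1_id rec1_snd rec1_fst)
  then have "rec1 (\<lambda>p. if fst (prod_decode p) = 0 then fst (prod_decode (snd (prod_decode p))) else snd (prod_decode (snd (prod_decode p))))"
    by (simp add: PR_if)
  from rec1_comp[OF this rec1_pair[OF c rec1_pair[OF f g]]] show ?thesis by (simp only: prod_encode_inverse prod.sel)
qed

lemma rec1_ifeq: "rec1 c \<Longrightarrow> rec1 d \<Longrightarrow> rec1 f \<Longrightarrow> rec1 g \<Longrightarrow> rec1 (\<lambda>x. if c x = d x then f x else g x)"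
proof -
  assume c: "rec1 c" and d: "rec1 d" and f: "rec1 f" and g: "rec1 g"
  have "rec1 (\<lambda>x. if (c x - d x) + (d x - c x) = 0 then f x else g x)"
    by (intro rec1_if0 rec1_add rec1_sub c d f g)
  moreover have "((c x - d x) + (d x - c x) = 0) = (c x = d x)" for x by auto
  ultimately show ?thesis by simp
qed

lemma PR_mod4: "PR (\<lambda>_. 0) (\<lambda>q. if snd (prod_decode q) = 3 then 0 else Suc (snd (prod_decode q))) n y = n mod 4"
  by (induction n) (auto simp: mod_Suc)

lemma rec1_mod4: "rec1 f \<Longrightarrow> rec1 (\<lambda>x. f x mod 4)"
proof -
  assume f: "rec1 f"
  have "rec1 (\<lambda>p. PR (\<lambda>_. 0) (\<lambda>q. if snd (prod_decode q) = 3 then 0 else Suc (snd (prod_decode q))) (fst (prod_decode p)) (snd (prod_decode p)))"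
    by (intro rec1_PR rec1_const rec1_ifeq rec1_snd rec1_id rec1_suc)
  then have "rec1 (\<lambda>p. fst (prod_decode p) mod 4)" by (simp add: PR_mod4)
  from rec1_comp[OF this rec1_pair[OF f rec1_const]] show ?thesis by simp
qed

lemmas rec1_rules = rec1_const rec1_id rec1_fst rec1_snd rec1_suc rec1_pair rec1_add rec1_sub
  rec1_ifeq rec1_mod4


section \<open>An abstract machine\<close>

definition Ev :: "nat \<Rightarrow> nat \<Rightarrow> nat \<Rightarrow> nat" where
  "Ev e x K = prod_encode (0, prod_encode (e, prod_encode (x, K)))"
definition Ret :: "nat \<Rightarrow> nat \<Rightarrow> nat" where
  "Ret v K = prod_encode (1, prod_encode (v, K))"
definition push :: "nat \<Rightarrow> nat \<Rightarrow> nat" where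
  "push fr K = Suc (prod_encode (fr, K))"
definition dT :: "nat \<Rightarrow> nat" where "dT e = fst (prod_decode (e - 4))"
definition dR :: "nat \<Rightarrow> nat" where "dR e = snd (prod_decode (e - 4))"
definition dA :: "nat \<Rightarrow> nat" where "dA e = fst (prod_decode (snd (prod_decode (e - 4))))"
definition dB :: "nat \<Rightarrow> nat" where "dB e = snd (prod_decode (snd (prod_decode (e - 4))))"

definition step :: "nat \<Rightarrow> nat" where
  "step s = (let m = fst (prod_decode s); d = snd (prod_decode s) in
   if m = 0 then
     (let e = fst (prod_decode d); x = fst (prod_decode (snd (prod_decode d)));
          K = snd (prod_decode (snd (prod_decode d))) in
      if e = 0 then Ret 0 K
      else if e = 1 then Ret (Suc x) K
      else if e = 2 then Ret (fst (prod_decode x)) K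
      else if e = 3 then Ret (snd (prod_decode x)) K
      else if dT e mod 4 = 0 then Ev (dB e) x (push (prod_encode (0, dA e)) K)
      else if dT e mod 4 = 1 then Ev (dA e) x (push (prod_encode (1, prod_encode (dB e, x))) K)
      else if dT e mod 4 = 2 then
        (if fst (prod_decode x) = 0 then Ev (dA e) (snd (prod_decode x)) K
         else Ev e (prod_encode (fst (prod_decode x) - 1, snd (prod_decode x)))
                (push (prod_encode (3, prod_encode (e, prod_encode (fst (prod_decode x) - 1, snd (prod_decode x))))) K))
      else Ev (dR e) (prod_encode (0, x)) (push (prod_encode (4, prod_encode (e, prod_encode (0, x)))) K))
   else
     (let v = fst (prod_decode d); K = snd (prod_decode d) in
      if K = 0 then s
      else (let fr = fst (prod_decode (K - 1)); K' = snd (prod_decode (K - 1));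
                tag = fst (prod_decode fr); fd = snd (prod_decode fr) in
        if tag = 0 then Ev fd v K'
        else if tag = 1 then Ev (fst (prod_decode fd)) (snd (prod_decode fd)) (push (prod_encode (2, v)) K')
        else if tag = 2 then Ret (prod_encode (fd, v)) K'
        else if tag = 3 then Ev (dB (fst (prod_decode fd))) (prod_encode (snd (prod_decode fd), v)) K'
        else (if v = 0 then Ret (fst (prod_decode (snd (prod_decode fd)))) K'
              else Ev (dR (fst (prod_decode fd)))
                     (prod_encode (Suc (fst (prod_decode (snd (prod_decode fd)))), snd (prod_decode (snd (prod_decode fd)))))
                     (push (prod_encode (4, prod_encode (fst (prod_decode fd),
                        prod_encode (Suc (fst (prod_decode (snd (prod_decode fd)))), snd (prod_decode (snd (prod_decode fd))))))) K')))))"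

lemma rec1_step: "rec1 step"
  unfolding step_def Let_def Ev_def Ret_def push_def dT_def dR_def dA_def dB_def
  by (intro rec1_rules)


declare decode.simps[simp del]

lemma decode_big: "4 \<le> e \<Longrightarrow> decode e =
  (if dT e mod 4 = 0 then Comp (decode (dA e)) (decode (dB e))
   else if dT e mod 4 = 1 then Pair (decode (dA e)) (decode (dB e))
   else if dT e mod 4 = 2 then Prec (decode (dA e)) (decode (dB e))
   else Mu (decode (dR e)))"
  by (subst decode.simps) (simp add: Let_def dT_def dA_def dB_def dR_def)

lemma decode_small: "decode 0 = Zero" "decode 1 = Succ" "decode 2 = Left" "decode 3 = Right"
  by (subst decode.simps; simp)+

lemma dec_Zero: assumes that: "decode e = Zero" shows "e = 0"
proof (cases "e < 4")
  case True
  then have "e = 0 \<or> e = 1 \<or> e = 2 \<or> e = 3" by arith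
  then show ?thesis using that decode_small by auto
next
  case False
  then show ?thesis using that decode_big[of e] by (auto split: if_splits)
qed
lemma dec_Succ: assumes that: "decode e = Succ" shows "e = 1"
proof (cases "e < 4")
  case True
  then have "e = 0 \<or> e = 1 \<or> e = 2 \<or> e = 3" by arith
  then show ?thesis using that decode_small by auto
next
  case False
  then show ?thesis using that decode_big[of e] by (auto split: if_splits)
qed
lemma dec_Left: assumes that: "decode e = Left" shows "e = 2"
proof (cases "e < 4")
  case True
  then have "e = 0 \<or> e = 1 \<or> e = 2 \<or> e = 3" by arith
  then show ?thesis using that decode_small by auto
next
  case False
  then show ?thesis using that decode_big[of e] by (auto split: if_splits)
qed
lemma dec_Right: assumes that: "decode e = Right" shows "e = 3"
proof (cases "e < 4")
  case True
  then have "e = 0 \<or> e = 1 \<or> e = 2 \<or> e = 3" by arith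
  then show ?thesis using that decode_small by auto
next
  case False
  then show ?thesis using that decode_big[of e] by (auto split: if_splits)
qed
lemma dec_Comp: assumes that: "decode e = Comp f g" shows "4 \<le> e \<and> dT e mod 4 = 0 \<and> decode (dA e) = f \<and> decode (dB e) = g"
proof (cases "e < 4")
  case True
  then have "e = 0 \<or> e = 1 \<or> e = 2 \<or> e = 3" by arith
  then show ?thesis using that decode_small by auto
next
  case False
  then show ?thesis using that decode_big[of e] by (auto split: if_splits)
qed
lemma dec_Pair: assumes that: "decode e = Pair f g" shows "4 \<le> e \<and> dT e mod 4 = 1 \<and> decode (dA e) = f \<and> decode (dB e) = g"
proof (cases "e < 4")
  case True
  then have "e = 0 \<or> e = 1 \<or> e = 2 \<or> e = 3" by arith
  then show ?thesis using that decode_small by auto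
next
  case False
  then show ?thesis using that decode_big[of e] by (auto split: if_splits)
qed
lemma dec_Prec: assumes that: "decode e = Prec f g" shows "4 \<le> e \<and> dT e mod 4 = 2 \<and> decode (dA e) = f \<and> decode (dB e) = g"
proof (cases "e < 4")
  case True
  then have "e = 0 \<or> e = 1 \<or> e = 2 \<or> e = 3" by arith
  then show ?thesis using that decode_small by auto
next
  case False
  then show ?thesis using that decode_big[of e] by (auto split: if_splits)
qed
lemma dec_Mu: assumes that: "decode e = Mu f" shows "4 \<le> e \<and> dT e mod 4 \<noteq> 0 \<and> dT e mod 4 \<noteq> 1 \<and> dT e mod 4 \<noteq> 2 \<and> decode (dR e) = f"
proof (cases "e < 4")
  case True
  then have "e = 0 \<or> e = 1 \<or> e = 2 \<or> e = 3" by arith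
  then show ?thesis using that decode_small by auto
next
  case False
  then show ?thesis using that decode_big[of e] by (auto split: if_splits)
qed

lemma step_Zero: "step (Ev 0 x K) = Ret 0 K"
  by (simp add: step_def Ev_def)
lemma step_Succ: "step (Ev 1 x K) = Ret (Suc x) K"
  by (simp add: step_def Ev_def)
lemma step_Left: "step (Ev 2 x K) = Ret (fst (prod_decode x)) K"
  by (simp add: step_def Ev_def)
lemma step_Right: "step (Ev 3 x K) = Ret (snd (prod_decode x)) K"
  by (simp add: step_def Ev_def)
lemma step_Comp: "4 \<le> e \<Longrightarrow> dT e mod 4 = 0 \<Longrightarrow> step (Ev e x K) = Ev (dB e) x (push (prod_encode (0, dA e)) K)"
  by (simp add: step_def Ev_def)
lemma step_Pair: "4 \<le> e \<Longrightarrow> dT e mod 4 = 1 \<Longrightarrow> step (Ev e x K) = Ev (dA e) x (push (prod_encode (1, prod_encode (dB e, x))) K)"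
  by (simp add: step_def Ev_def)
lemma step_Prec0: "4 \<le> e \<Longrightarrow> dT e mod 4 = 2 \<Longrightarrow> step (Ev e (prod_encode (0, y)) K) = Ev (dA e) y K"
  by (simp add: step_def Ev_def)
lemma step_PrecS: "4 \<le> e \<Longrightarrow> dT e mod 4 = 2 \<Longrightarrow> step (Ev e (prod_encode (Suc n, y)) K) =
   Ev e (prod_encode (n, y)) (push (prod_encode (3, prod_encode (e, prod_encode (n, y)))) K)"
  by (simp add: step_def Ev_def)
lemma step_Mu: "4 \<le> e \<Longrightarrow> dT e mod 4 \<noteq> 0 \<Longrightarrow> dT e mod 4 \<noteq> 1 \<Longrightarrow> dT e mod 4 \<noteq> 2 \<Longrightarrow>
   step (Ev e x K) = Ev (dR e) (prod_encode (0, x)) (push (prod_encode (4, prod_encode (e, prod_encode (0, x)))) K)"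
  by (simp add: step_def Ev_def)
lemma step_RetC: "step (Ret v (push (prod_encode (0, a)) K)) = Ev a v K"
  by (simp add: step_def Ret_def push_def)
lemma step_RetP1: "step (Ret v (push (prod_encode (1, prod_encode (b, x))) K)) = Ev b x (push (prod_encode (2, v)) K)"
  by (simp add: step_def Ret_def push_def)
lemma step_RetP2: "step (Ret v (push (prod_encode (2, y)) K)) = Ret (prod_encode (y, v)) K"
  by (simp add: step_def Ret_def push_def)
lemma step_RetPr: "step (Ret v (push (prod_encode (3, prod_encode (e, p))) K)) = Ev (dB e) (prod_encode (p, v)) K"
  by (simp add: step_def Ret_def push_def)
lemma step_RetM0: "step (Ret 0 (push (prod_encode (4, prod_encode (e, prod_encode (i, x)))) K)) = Ret i K"
  by (simp add: step_def Ret_def push_def)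
lemma step_RetMS: "v \<noteq> 0 \<Longrightarrow> step (Ret v (push (prod_encode (4, prod_encode (e, prod_encode (i, x)))) K)) =
   Ev (dR e) (prod_encode (Suc i, x)) (push (prod_encode (4, prod_encode (e, prod_encode (Suc i, x)))) K)"
  by (simp add: step_def Ret_def push_def)
lemma step_halt: "step (Ret v 0) = Ret v 0"
  by (simp add: step_def Ret_def)

definition reach :: "nat \<Rightarrow> nat \<Rightarrow> bool" where
  "reach s t \<longleftrightarrow> (\<exists>n. (step ^^ n) s = t)"

lemma reach_refl: "reach s s"
  unfolding reach_def by (metis funpow_0)

lemma reach_trans: "reach s t \<Longrightarrow> reach t u \<Longrightarrow> reach s u"
  unfolding reach_def by (metis funpow_add comp_apply)

lemma reach_step: "reach (step s) t \<Longrightarrow> reach s t"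
  unfolding reach_def by (metis funpow_Suc_right comp_apply)

lemma reach_step_eq: "step s = s' \<Longrightarrow> reach s' t \<Longrightarrow> reach s t"
  using reach_step by blast


lemma simulate: "eval f x v \<Longrightarrow> decode e = f \<Longrightarrow> reach (Ev e x K) (Ret v K)"
proof (induction arbitrary: e K rule: eval.induct)
  case (eval_Zero x)
  from dec_Zero[OF eval_Zero.prems] have "e = 0" .
  then show ?case using reach_step_eq[OF step_Zero reach_refl] by simp
next
  case (eval_Succ x)
  from dec_Succ[OF eval_Succ.prems] have "e = 1" .
  then show ?case using reach_step_eq[OF step_Succ reach_refl] by simp
next
  case (eval_Left x)
  from dec_Left[OF eval_Left.prems] have "e = 2" .
  then show ?case using reach_step_eq[OF step_Left reach_refl] by simp
next
  case (eval_Right x)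
  from dec_Right[OF eval_Right.prems] have "e = 3" .
  then show ?case using reach_step_eq[OF step_Right reach_refl] by simp
next
  case (eval_Comp g x y f z)
  note d = dec_Comp[OF eval_Comp.prems]
  have s1: "step (Ev e x K) = Ev (dB e) x (push (prod_encode (0, dA e)) K)"
    using d by (intro step_Comp) auto
  have r1: "reach (Ev (dB e) x (push (prod_encode (0, dA e)) K)) (Ret y (push (prod_encode (0, dA e)) K))"
    using eval_Comp.IH(1) d by blast
  have r2: "reach (Ev (dA e) y K) (Ret z K)"
    using eval_Comp.IH(2) d by blast
  show ?case
    by (rule reach_step_eq[OF s1 reach_trans[OF r1 reach_step_eq[OF step_RetC r2]]])
next
  case (eval_Pair f x y g z)
  note d = dec_Pair[OF eval_Pair.prems]
  let ?K1 = "push (prod_encode (1, prod_encode (dB e, x))) K"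
  let ?K2 = "push (prod_encode (2, y)) K"
  have s1: "step (Ev e x K) = Ev (dA e) x ?K1"
    using d by (intro step_Pair) auto
  have r1: "reach (Ev (dA e) x ?K1) (Ret y ?K1)" using eval_Pair.IH(1) d by blast
  have r2: "reach (Ev (dB e) x ?K2) (Ret z ?K2)" using eval_Pair.IH(2) d by blast
  have r3: "reach (Ret z ?K2) (Ret (prod_encode (y, z)) K)"
    by (rule reach_step_eq[OF step_RetP2 reach_refl])
  show ?case
    by (rule reach_step_eq[OF s1 reach_trans[OF r1 reach_step_eq[OF step_RetP1 reach_trans[OF r2 r3]]]])
next
  case (eval_Prec0 f y z g)
  note d = dec_Prec[OF eval_Prec0.prems]
  have s1: "step (Ev e (prod_encode (0, y)) K) = Ev (dA e) y K"
    using d by (intro step_Prec0) auto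
  have r1: "reach (Ev (dA e) y K) (Ret z K)" using eval_Prec0.IH d by blast
  show ?case by (rule reach_step_eq[OF s1 r1])
next
  case (eval_PrecS f g n y z w)
  note d = dec_Prec[OF eval_PrecS.prems]
  let ?K1 = "push (prod_encode (3, prod_encode (e, prod_encode (n, y)))) K"
  have s1: "step (Ev e (prod_encode (Suc n, y)) K) = Ev e (prod_encode (n, y)) ?K1"
    using d by (intro step_PrecS) auto
  have r1: "reach (Ev e (prod_encode (n, y)) ?K1) (Ret z ?K1)" using eval_PrecS.IH(1) eval_PrecS.prems by blast
  have r2: "reach (Ev (dB e) (prod_encode (prod_encode (n, y), z)) K) (Ret w K)"
    using eval_PrecS.IH(2) d by blast
  show ?case
    by (rule reach_step_eq[OF s1 reach_trans[OF r1 reach_step_eq[OF step_RetPr r2]]])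
next
  case (eval_Mu f n x)
  note d = dec_Mu[OF eval_Mu.prems]
  define KK where "KK i = push (prod_encode (4, prod_encode (e, prod_encode (i, x)))) K" for i
  have IH2: "\<forall>i<n. \<exists>v. v \<noteq> 0 \<and> reach (Ev (dR e) (prod_encode (i, x)) (KK i)) (Ret v (KK i))"
    using eval_Mu.IH(2) d by blast
  have s0: "step (Ev e x K) = Ev (dR e) (prod_encode (0, x)) (KK 0)"
    unfolding KK_def using d by (intro step_Mu) auto
  have *: "i \<le> n \<Longrightarrow> reach (Ev e x K) (Ev (dR e) (prod_encode (i, x)) (KK i))" for i
  proof (induction i)
    case 0
    show ?case by (rule reach_step_eq[OF s0 reach_refl])
  next
    case (Suc i)
    then have "i < n" by simp
    with IH2 obtain v where v: "v \<noteq> 0" "reach (Ev (dR e) (prod_encode (i, x)) (KK i)) (Ret v (KK i))"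
      by blast
    have s: "step (Ret v (KK i)) = Ev (dR e) (prod_encode (Suc i, x)) (KK (Suc i))"
      unfolding KK_def by (rule step_RetMS[OF v(1)])
    have "reach (Ev e x K) (Ev (dR e) (prod_encode (i, x)) (KK i))" using Suc by simp
    then show ?case
      by (rule reach_trans[OF _ reach_trans[OF v(2) reach_step_eq[OF s reach_refl]]])
  qed
  have r1: "reach (Ev (dR e) (prod_encode (n, x)) (KK n)) (Ret 0 (KK n))" using eval_Mu.IH(1) d by blast
  have s2: "step (Ret 0 (KK n)) = Ret n K" unfolding KK_def by (rule step_RetM0)
  show ?case by (rule reach_trans[OF *[of n] reach_trans[OF r1 reach_step_eq[OF s2 reach_refl]]]) simp
qed


section \<open>A universal program\<close>

definition halted :: "nat \<Rightarrow> bool" where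
  "halted s \<longleftrightarrow> fst (prod_decode s) = 1 \<and> snd (prod_decode (snd (prod_decode s))) = 0"

lemma halted_fix: "halted s \<Longrightarrow> step s = s"
proof -
  assume h: "halted s"
  have "s = prod_encode (fst (prod_decode s), snd (prod_decode s))" by simp
  also have "snd (prod_decode s) = prod_encode (fst (prod_decode (snd (prod_decode s))), snd (prod_decode (snd (prod_decode s))))" by simp
  finally have "s = Ret (fst (prod_decode (snd (prod_decode s)))) 0" using h unfolding halted_def Ret_def by simp
  then show ?thesis using step_halt by metis
qed

lemma halted_funpow: "halted s \<Longrightarrow> (step ^^ j) s = s"
  by (induction j) (auto simp: halted_fix)

lemma halted_Ret: "halted (Ret v 0)"
  by (simp add: halted_def Ret_def)

definition initst :: "nat \<Rightarrow> nat" where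
  "initst p = Ev (fst (prod_decode p)) (snd (prod_decode p)) 0"

lemma rec1_init: "rec1 initst"
  unfolding initst_def Ev_def by (intro rec1_rules)

lemma rec1_halt: "rec1 (\<lambda>s. if halted s then 0 else 1)"
proof -
  have "rec1 (\<lambda>s. if fst (prod_decode s) = 1 then (if snd (prod_decode (snd (prod_decode s))) = 0 then 0 else 1) else 1)"
    by (intro rec1_rules)
  moreover have "(\<lambda>s. if halted s then 0 else 1) = (\<lambda>s. if fst (prod_decode s) = 1 then (if snd (prod_decode (snd (prod_decode s))) = 0 then 0 else 1) else (1::nat))"
    by (auto simp: halted_def fun_eq_iff)
  ultimately show ?thesis by simp
qed

lemma rec1_out: "rec1 (\<lambda>s. fst (prod_decode (snd (prod_decode s))))"
  by (intro rec1_rules)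

lemma universal: "\<exists>U. \<forall>e y v. eval (decode e) y v \<longrightarrow> eval U (prod_encode (e, y)) v"
proof -
  obtain rStep where rStep: "\<And>s. eval rStep s (step s)" using rec1_step unfolding rec1_def by blast
  obtain rInit where rInit: "\<And>s. eval rInit s (initst s)" using rec1_init unfolding rec1_def by blast
  obtain rHalt where rHalt: "\<And>s. eval rHalt s (if halted s then 0 else 1)" using rec1_halt unfolding rec1_def by blast
  obtain rOut where rOut: "\<And>s. eval rOut s (fst (prod_decode (snd (prod_decode s))))" using rec1_out unfolding rec1_def by blast
  define Iter where "Iter = Prec rInit (Comp rStep Right)"
  have iter: "eval Iter (prod_encode (k, p)) ((step ^^ k) (initst p))" for k p
  proof (induction k)
    case 0
    then show ?case unfolding Iter_def by (auto intro: eval.intros rInit)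
  next
    case (Suc k)
    have "eval (Comp rStep Right) (prod_encode (prod_encode (k, p), (step ^^ k) (initst p))) (step ((step ^^ k) (initst p)))"
      by (rule eval_Comp[OF _ rStep]) (use eval_Right[of "prod_encode (prod_encode (k, p), (step ^^ k) (initst p))"] in simp)
    then show ?case using Suc unfolding Iter_def by (auto intro: eval_PrecS)
  qed
  define F where "F = Comp rHalt Iter"
  define U where "U = Comp (Comp rOut Iter) (Pair (Mu F) (Pair Left Right))"
  have "eval U (prod_encode (e, y)) v" if ev: "eval (decode e) y v" for e y v
  proof -
    let ?p = "prod_encode (e, y)"
    let ?S = "\<lambda>k. (step ^^ k) (initst ?p)"
    have "initst ?p = Ev e y 0" by (simp add: initst_def)
    with simulate[OF ev refl, of 0] obtain n0 where n0: "?S n0 = Ret v 0"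
      unfolding reach_def by auto
    then have hn0: "halted (?S n0)" using halted_Ret by simp
    define km where "km = (LEAST k. halted (?S k))"
    have hkm: "halted (?S km)" unfolding km_def using hn0 by (rule LeastI)
    have kmle: "km \<le> n0" unfolding km_def using hn0 by (rule Least_le)
    have nh: "\<not> halted (?S i)" if "i < km" for i
      using that unfolding km_def using not_less_Least by blast
    have "?S n0 = (step ^^ (n0 - km)) (?S km)"
      using kmle funpow_add[of "n0 - km" km step] by simp
    also have "\<dots> = ?S km" using halted_funpow[OF hkm] by simp
    finally have Skm: "?S km = Ret v 0" using n0 by simp
    have "eval F (prod_encode (km, ?p)) 0"
      unfolding F_def using eval_Comp[OF iter rHalt, of km ?p] hkm by simp
    moreover have "\<forall>i<km. \<exists>w. w \<noteq> 0 \<and> eval F (prod_encode (i, ?p)) w"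
    proof (intro allI impI)
      fix i assume "i < km"
      then have "\<not> halted (?S i)" by (rule nh)
      then have "eval F (prod_encode (i, ?p)) 1" unfolding F_def using eval_Comp[OF iter rHalt, of i ?p] by simp
      then show "\<exists>w. w \<noteq> 0 \<and> eval F (prod_encode (i, ?p)) w" by blast
    qed
    ultimately have mu: "eval (Mu F) ?p km" by (rule eval_Mu)
    have "eval (Pair (Mu F) (Pair Left Right)) ?p (prod_encode (km, ?p))"
      by (rule eval_Pair[OF mu eval_id])
    moreover have "eval (Comp rOut Iter) (prod_encode (km, ?p)) v"
    proof -
      have "eval rOut (?S km) v" using rOut[of "?S km"] Skm by (simp add: Ret_def)
      then show ?thesis by (rule eval_Comp[OF iter])
    qed
    ultimately show ?thesis unfolding U_def by (rule eval_Comp)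
  qed
  then show ?thesis by blast
qed


fun encode :: "recf \<Rightarrow> nat" where
  "encode Zero = 0"
| "encode Succ = 1"
| "encode Left = 2"
| "encode Right = 3"
| "encode (Comp f g) = 4 + prod_encode (0, prod_encode (encode f, encode g))"
| "encode (Pair f g) = 4 + prod_encode (1, prod_encode (encode f, encode g))"
| "encode (Prec f g) = 4 + prod_encode (2, prod_encode (encode f, encode g))"
| "encode (Mu f) = 4 + prod_encode (3, encode f)"

lemma decode_encode: "decode (encode r) = r"
proof -
  have s1: "decode (Suc 0) = Succ" using decode_small(2) by simp
  show ?thesis
    by (induction r) (simp_all add: s1 decode_small decode_big dT_def dA_def dB_def dR_def)
qed

lemma phi_eval: "eval (decode n) x v \<Longrightarrow> phi n x = Some v"
  unfolding phi_def using eval_fun by auto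

lemma eval_phi: "phi n x = Some v \<Longrightarrow> eval (decode n) x v"
  unfolding phi_def by (auto split: if_splits intro: theI2 eval_det)

theorem mainTheorem9:
  fixes SafeInstance :: "nat set"
  assumes "\<exists>a b. a \<in> SafeInstance \<and> b \<in> SafeInstance \<and> a \<noteq> b"
  shows "\<not> (\<exists>L. captures L (\<lambda>g. \<forall>x. halts g x \<and> the (phi g x) \<in> SafeInstance))"
proof
  let ?psi = "\<lambda>g. \<forall>x. halts g x \<and> the (phi g x) \<in> SafeInstance"
  assume "\<exists>L. captures L ?psi"
  then obtain L where dec: "decidable L" and inL: "\<forall>g\<in>L. ?psi g"
    and cap: "\<forall>g'. ?psi g' \<longrightarrow> (\<exists>g\<in>L. phi g = phi g')"
    unfolding captures_def by blast
  obtain a b where ab: "a \<in> SafeInstance" "b \<in> SafeInstance" "a \<noteq> b" using assms by blast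
  obtain d where d: "\<And>x. phi d x = Some (if x \<in> L then 1 else 0)" using dec unfolding decidable_def by blast
  have dE: "eval (decode d) x (if x \<in> L then 1 else 0)" for x using d eval_phi by blast
  obtain U where U: "\<And>e y v. eval (decode e) y v \<Longrightarrow> eval U (prod_encode (e, y)) v"
    using universal by blast
  define flip where "flip v = (if v = a then b else a)" for v
  have "rec1 (\<lambda>v. if v = a then b else a)" by (intro rec1_rules)
  then obtain rFlip where rFlip: "\<And>v. eval rFlip v (flip v)" unfolding rec1_def flip_def by blast
  define R where "R = Comp Right Left"
  define S where "S = Comp rFlip (Comp U (Pair R R))"
  define H where "H = Comp (Prec (cprog a) S) (Pair (decode d) (Pair Left Right))"
  define hval where "hval x = (if x \<in> L then flip (the (phi x x)) else a)" for x
  have Hx: "eval H x (hval x)" for x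
  proof (cases "x \<in> L")
    case False
    have p: "eval (Pair (decode d) (Pair Left Right)) x (prod_encode (0, x))"
      using eval_Pair[OF dE[of x] eval_id] False by simp
    have r: "eval (Prec (cprog a) S) (prod_encode (0, x)) a"
      by (rule eval_Prec0[OF eval_cprog])
    have "eval H x a" unfolding H_def by (rule eval_Comp[OF p r])
    then show ?thesis unfolding hval_def using False by simp
  next
    case True
    then have "halts x x" using inL by blast
    then obtain v where v: "phi x x = Some v" unfolding halts_def by blast
    then have ev: "eval (decode x) x v" by (rule eval_phi)
    have p1: "eval (Pair (decode d) (Pair Left Right)) x (prod_encode (Suc 0, x))"
      using eval_Pair[OF dE[of x] eval_id] True by simp
    have R: "eval R (prod_encode (prod_encode (0, x), a)) x"
    proof -
      have "eval R (prod_encode (prod_encode (0, x), a)) (snd (prod_decode (fst (prod_decode (prod_encode (prod_encode (0, x), a))))))"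
        unfolding R_def by (rule eval_Comp[OF eval_Left eval_Right])
      then show ?thesis by simp
    qed
    have "eval S (prod_encode (prod_encode (0, x), a)) (flip v)"
      unfolding S_def by (intro eval_Comp[OF _ rFlip] eval_Comp[OF _ U[OF ev]] eval_Pair R)
    then have "eval (Prec (cprog a) S) (prod_encode (Suc 0, x)) (flip v)"
      by (intro eval_PrecS[OF eval_Prec0[OF eval_cprog]])
    with p1 show ?thesis unfolding H_def hval_def using True v by (auto intro: eval_Comp)
  qed
  define h where "h = encode H"
  have ph: "phi h x = Some (hval x)" for x
    unfolding h_def by (rule phi_eval) (simp add: decode_encode Hx)
  have "hval x \<in> SafeInstance" for x
    unfolding hval_def flip_def using ab by auto
  then have "?psi h" using ph by (simp add: halts_def)
  then obtain g where g: "g \<in> L" "phi g = phi h" using cap by blast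
  then have "halts g g" using inL by blast
  then obtain v where v: "phi g g = Some v" unfolding halts_def by blast
  have "phi h g = Some (flip v)" using ph g(1) v unfolding hval_def by simp
  then have "v = flip v" using g(2) v by simp
  then show False unfolding flip_def using ab(3) by (auto split: if_splits)
qed

end
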